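(* For every nested marble transducer $T$ (of any level $k\ge0$), the domain $\mathrm{dom}(f_T)$ of the transduction it recognizes is a regular language.
   Context: Nested marble transducers (NMT). For an input $u\in\Sigma^*$ of length $n$, machines read $\vdash u\dashv$, with positions $0,\dots,n+1$: position $0$ carries $\vdash$ and position $n+1$ carries $\dashv$. Level 0. A $(0,\Sigma,\Gamma)$-NMT (simple transducer) is $T=(A,\mu)$, where $A=(Q,q_0,F,\delta)$ is a DFA over $\Sigma\cup\{\vdash,\dashv\}$ and $\mu:F\to\Gamma^{\le1}$. Its operational semantics is $f^{op}_T(q,u)=(\mu(q_f),q_f)$ if $A$ goes from $q$ to some $q_f\in F$ reading $\vdash u\dashv$, undefined otherwise. Level $k\ge1$. A $(k,\Sigma,\Gamma)$-NMT is a tuple $T=(C,c_0,Q,q_0,F,\delta,\delta_{call},\delta_{ret},\mu,T')$ where: - $C$ is a finite set of marble colours and $c_0\in C$; - $Q$ is a finite set of states, $q_0$ is initial and $F\subseteq Q$ is accepting; - the assistant $T'$ is a $(k-1,\Sigma\times C,\Gamma)$-NMT with state set $Q'$ and accepting set $F'$; - $\delta:Q\times(\Sigma\cup\{\dashv\})\times C\rightharpoonup(C\cup\{\bot\})\times Q$; - $\delta_{call}:Q\times C\to Q'$ and $\delta_{ret}:Q\times C\times F'\to Q$; - $\mu:\mathrm{dom}(\delta)\to\Gamma^*$. A configuration on $u$ is $(q,i,v)$ with $q\in Q$, $0\le i\le n+1$ and $v\in C^{n+2-i}$, the marbles on positions $i,\dots,n+1$. Writing $v=cv'$ and $\sigma$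 for the letter at position $i$, the steps are: 1. If $1\le i\le n+1$ and $\delta(q,\sigma,c)=(c',q')$, then $(q,i,cv')\to(q',i-1,c'cv')$ with output $\mu(q,\sigma,c)$ (drop a marble, move left). 2. If $1\le i\le n$ and $\delta(q,\sigma,c)=(\bot,q')$, then $(q,i,cv')\to(q',i+1,v')$ with output $\mu(q,\sigma,c)$ (lift the marble, move right). 3. If $i=0$ and $f^{op}_{T'}(\delta_{call}(q,c),\tilde u)=(x,p)$, then $(q,0,cv')\to(\delta_{ret}(q,c,p),1,v')$ with output $x$. Here $\tilde u$ is $\vdash u\dashv$ annotated position-wise with the current marbles $cv'$. $f^{op}_T(q,u)=(x_1\cdots x_m,q_f)$ if the steps from $(q,n+1,c_0)$, with outputs $x_1,\dots,x_m$, reach a configuration with state $q_f\in F$, all earlier configurations having non-accepting states; otherwise it is undefined. At every level $k\ge0$, $f_T(u)$ is the first component of $f^{op}_T(q_0,u)$, and $k$ is the level of $T$. We write $k$-NMT for an NMT of level $k$. *)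

theory Defs
  imports Main
begin

text \<open>Letters seen by a machine: a base input letter together with the list of
marble colours that annotate it (innermost-added colour first).  A top-level
machine over the alphabet 'a reads letters (a, []); its assistant reads
(a, [c]); the assistant's assistant reads (a, [c', c]), etc.  This uniform
letter type encodes the nested alphabets Sigma, Sigma x C, (Sigma x C) x C', ...\<close>
type_synonym 'a letter = "'a \<times> nat list"

datatype 'b esym = LEnd | REnd | Let 'b

text \<open>Simple: states, initial state, accepting states, DFA transition, output
(Gamma^{<=1}, as an option).
Nest: colours C, initial colour c0, states Q, initial q0, accepting F,
delta (letter None = right end marker; result None = undefined;
result Some (None, q') = lift marble (bottom); Some (Some c', q') = drop c'),
delta_call, delta_ret, mu, assistant.\<close>
datatype ('a, 'g) nmt =
    Simple "nat set" nat "nat set" "nat \<Rightarrow> 'a letter esym \<Rightarrow> nat" "nat \<Rightarrow> 'g option"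
  | Nest "nat set" nat "nat set" nat "nat set"
         "nat \<Rightarrow> 'a letter option \<Rightarrow> nat \<Rightarrow> (nat option \<times> nat) option"
         "nat \<Rightarrow> nat \<Rightarrow> nat"
         "nat \<Rightarrow> nat \<Rightarrow> nat \<Rightarrow> nat"
         "nat \<Rightarrow> 'a letter option \<Rightarrow> nat \<Rightarrow> 'g list"
         "('a, 'g) nmt"

primrec nmt_states :: "('a, 'g) nmt \<Rightarrow> nat set" where
  "nmt_states (Simple Q q0 F \<delta> \<mu>) = Q"
| "nmt_states (Nest C c0 Q q0 F \<delta> dc dr \<mu> T') = Q"

primrec nmt_init :: "('a, 'g) nmt \<Rightarrow> nat" where
  "nmt_init (Simple Q q0 F \<delta> \<mu>) = q0"
| "nmt_init (Nest C c0 Q q0 F \<delta> dc dr \<mu> T') = q0"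

primrec nmt_final :: "('a, 'g) nmt \<Rightarrow> nat set" where
  "nmt_final (Simple Q q0 F \<delta> \<mu>) = F"
| "nmt_final (Nest C c0 Q q0 F \<delta> dc dr \<mu> T') = F"

primrec nmt_wf :: "('a, 'g) nmt \<Rightarrow> bool" where
  "nmt_wf (Simple Q q0 F \<delta> \<mu>) \<longleftrightarrow>
     finite Q \<and> q0 \<in> Q \<and> F \<subseteq> Q \<and> (\<forall>q\<in>Q. \<forall>a. \<delta> q a \<in> Q)"
| "nmt_wf (Nest C c0 Q q0 F \<delta> dc dr \<mu> T') \<longleftrightarrow>
     finite C \<and> c0 \<in> C \<and> finite Q \<and> q0 \<in> Q \<and> F \<subseteq> Q \<and>
     (\<forall>q\<in>Q. \<forall>a. \<forall>c\<in>C. \<forall>c' q'. \<delta> q a c = Some (Some c', q') \<longrightarrow> c' \<in> C \<and> q' \<in> Q) \<and>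
     (\<forall>q\<in>Q. \<forall>a. \<forall>c\<in>C. \<forall>q'. \<delta> q a c = Some (None, q') \<longrightarrow> q' \<in> Q) \<and>
     (\<forall>q\<in>Q. \<forall>c\<in>C. dc q c \<in> nmt_states T') \<and>
     (\<forall>q\<in>Q. \<forall>c\<in>C. \<forall>p\<in>nmt_final T'. dr q c p \<in> Q) \<and>
     nmt_wf T'"

text \<open>Configurations (q, i, v): state, head position in 0..n+1, marbles on
positions i..n+1 (head of the list = marble at position i).\<close>
type_synonym config = "nat \<times> nat \<times> nat list"

text \<open>Letter at position i (1 \<le> i \<le> n) of the input, or the right end marker
(None) at position n+1.\<close>
definition pos_letter :: "'b list \<Rightarrow> nat \<Rightarrow> 'b option" where
  "pos_letter w i = (if 1 \<le> i \<and> i \<le> length w then Some (w ! (i - 1)) else None)"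

text \<open>Annotation of the input letters at positions 1..n with the marbles on
those positions (the marbles on the end markers are the one at position 0, which
is passed via delta_call, and the one at position n+1, which is always c0).\<close>
definition annotate :: "'a letter list \<Rightarrow> nat list \<Rightarrow> 'a letter list" where
  "annotate w v = map (\<lambda>((a, cs), c). (a, c # cs)) (zip w v)"

definition nmt_step ::
  "(nat \<Rightarrow> 'a letter list \<Rightarrow> 'g list \<times> nat \<Rightarrow> bool)
   \<Rightarrow> (nat \<Rightarrow> 'a letter option \<Rightarrow> nat \<Rightarrow> (nat option \<times> nat) option)
   \<Rightarrow> (nat \<Rightarrow> nat \<Rightarrow> nat) \<Rightarrow> (nat \<Rightarrow> nat \<Rightarrow> nat \<Rightarrow> nat)
   \<Rightarrow> (nat \<Rightarrow> 'a letter option \<Rightarrow> nat \<Rightarrow> 'g list)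
   \<Rightarrow> 'a letter list \<Rightarrow> config \<Rightarrow> 'g list \<Rightarrow> config \<Rightarrow> bool" where
  "nmt_step opT' \<delta> dc dr \<mu> w cf x cf' \<longleftrightarrow>
     (case cf of (q, i, v) \<Rightarrow>
       (\<exists>c v'. v = c # v' \<and>
         ((1 \<le> i \<and> i \<le> length w + 1 \<and>
             (\<exists>c' q'. \<delta> q (pos_letter w i) c = Some (Some c', q') \<and>
                     cf' = (q', i - 1, c' # c # v') \<and> x = \<mu> q (pos_letter w i) c))
        \<or> (1 \<le> i \<and> i \<le> length w \<and>
             (\<exists>q'. \<delta> q (pos_letter w i) c = Some (None, q') \<and>
                   cf' = (q', i + 1, v') \<and> x = \<mu> q (pos_letter w i) c))
        \<or> (i = 0 \<and>
             (\<exists>p. opT' (dc q c) (annotate w v') (x, p) \<and>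
                  cf' = (dr q c p, 1, v'))))))"

primrec nmt_op :: "('a, 'g) nmt \<Rightarrow> nat \<Rightarrow> 'a letter list \<Rightarrow> 'g list \<times> nat \<Rightarrow> bool" where
  "nmt_op (Simple Q q0 F \<delta> \<mu>) q w r \<longleftrightarrow>
     (let qf = fold (\<lambda>a s. \<delta> s a) (LEnd # map Let w @ [REnd]) q in
        qf \<in> F \<and> r = ((case \<mu> qf of None \<Rightarrow> [] | Some g \<Rightarrow> [g]), qf))"
| "nmt_op (Nest C c0 Q q0 F \<delta> dc dr \<mu> T') q w r \<longleftrightarrow>
     (\<exists>cfs :: config list. \<exists>outs :: 'g list list.
        length cfs = length outs + 1 \<and>
        cfs ! 0 = (q, length w + 1, [c0]) \<and>
        (\<forall>j < length outs. nmt_step (nmt_op T') \<delta> dc dr \<mu> w (cfs ! j) (outs ! j) (cfs ! Suc j)) \<and>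
        (\<forall>j < length outs. fst (cfs ! j) \<notin> F) \<and>
        fst (last cfs) \<in> F \<and>
        r = (concat outs, fst (last cfs)))"

definition nmt_dom :: "('a, 'g) nmt \<Rightarrow> 'a list set" where
  "nmt_dom T = {u. \<exists>r. nmt_op T (nmt_init T) (map (\<lambda>a. (a, [])) u) r}"

definition regular_lang :: "'a list set \<Rightarrow> bool" where
  "regular_lang L \<longleftrightarrow>
     (\<exists>(Q :: nat set) q0 F (\<delta> :: nat \<Rightarrow> 'a \<Rightarrow> nat).
        finite Q \<and> q0 \<in> Q \<and> F \<subseteq> Q \<and> (\<forall>q\<in>Q. \<forall>a. \<delta> q a \<in> Q) \<and>
        L = {w. fold (\<lambda>a q. \<delta> q a) w q0 \<in> F})"

end

theory Submission
  imports Defs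
begin

definition recog :: "'b set \<Rightarrow> nat set \<Rightarrow> (nat \<Rightarrow> 'b list \<Rightarrow> nat \<Rightarrow> bool) \<Rightarrow> bool" where
  "recog A S P \<longleftrightarrow> (\<exists>\<Phi> :: 'b list \<Rightarrow> nat. finite (\<Phi> ` lists A) \<and>
     (\<forall>u\<in>lists A. \<forall>u'\<in>lists A. \<forall>v\<in>lists A. \<forall>v'\<in>lists A.
        \<Phi> u = \<Phi> u' \<longrightarrow> \<Phi> v = \<Phi> v' \<longrightarrow> \<Phi> (u @ v) = \<Phi> (u' @ v')) \<and>
     (\<forall>w\<in>lists A. \<forall>w'\<in>lists A. \<Phi> w = \<Phi> w' \<longrightarrow> (\<forall>q\<in>S. \<forall>p. P q w p = P q w' p)))"

lemma recogI:
  fixes \<Psi> :: "'b list \<Rightarrow> 'z"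
  assumes "finite (\<Psi> ` lists A)"
    and "\<And>u u' v v'. u\<in>lists A \<Longrightarrow> u'\<in>lists A \<Longrightarrow> v\<in>lists A \<Longrightarrow> v'\<in>lists A \<Longrightarrow>
        \<Psi> u = \<Psi> u' \<Longrightarrow> \<Psi> v = \<Psi> v' \<Longrightarrow> \<Psi> (u @ v) = \<Psi> (u' @ v')"
    and "\<And>w w' q p. w\<in>lists A \<Longrightarrow> w'\<in>lists A \<Longrightarrow> \<Psi> w = \<Psi> w' \<Longrightarrow> q \<in> S \<Longrightarrow> P q w p = P q w' p"
  shows "recog A S P"
proof -
  obtain f :: "'z \<Rightarrow> nat" and n where f: "f ` (\<Psi> ` lists A) = {i. i < n}" "inj_on f (\<Psi> ` lists A)"
    using finite_imp_inj_to_nat_seg[OF assms(1)] by blast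
  have eq: "f (\<Psi> u) = f (\<Psi> u') \<longleftrightarrow> \<Psi> u = \<Psi> u'" if "u \<in> lists A" "u' \<in> lists A" for u u'
    using f(2) that by (simp add: inj_on_eq_iff)
  show ?thesis unfolding recog_def
  proof (intro exI[of _ "f \<circ> \<Psi>"] conjI ballI impI allI)
    show "finite ((f \<circ> \<Psi>) ` lists A)" using finite_imageI[OF assms(1), of f] by (simp add: image_comp)
  next
    fix u u' v v' assume *: "u\<in>lists A" "u'\<in>lists A" "v\<in>lists A" "v'\<in>lists A"
      "(f \<circ> \<Psi>) u = (f \<circ> \<Psi>) u'" "(f \<circ> \<Psi>) v = (f \<circ> \<Psi>) v'"
    have "\<Psi> u = \<Psi> u'" "\<Psi> v = \<Psi> v'" using eq[OF *(1,2)] eq[OF *(3,4)] *(5,6) by simp_all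
    then show "(f \<circ> \<Psi>) (u @ v) = (f \<circ> \<Psi>) (u' @ v')" using assms(2)[OF *(1-4)] by simp
  next
    fix w w' q p assume *: "w\<in>lists A" "w'\<in>lists A" "(f \<circ> \<Psi>) w = (f \<circ> \<Psi>) w'" "q \<in> S"
    have "\<Psi> w = \<Psi> w'" using eq[OF *(1,2)] *(3) by simp
    then show "P q w p = P q w' p" using assms(3) *(1,2,4) by blast
  qed
qed

lemma recog_regular:
  fixes T :: "('a :: finite, 'g) nmt"
  assumes "recog (range (\<lambda>a. (a, []))) (nmt_states T) (\<lambda>q w p. \<exists>x. nmt_op T q w (x, p))"
    and q0: "nmt_init T \<in> nmt_states T"
  shows "regular_lang (nmt_dom T)"
proof -
  let ?A = "range (\<lambda>a::'a. (a, [] :: nat list))"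
  let ?P = "\<lambda>q w p. \<exists>x. nmt_op T q w (x, p)"
  obtain \<Phi> :: "'a letter list \<Rightarrow> nat" where fin: "finite (\<Phi> ` lists ?A)"
    and c: "\<forall>u\<in>lists ?A. \<forall>u'\<in>lists ?A. \<forall>v\<in>lists ?A. \<forall>v'\<in>lists ?A.
        \<Phi> u = \<Phi> u' \<longrightarrow> \<Phi> v = \<Phi> v' \<longrightarrow> \<Phi> (u @ v) = \<Phi> (u' @ v')"
    and d: "\<forall>w\<in>lists ?A. \<forall>w'\<in>lists ?A. \<Phi> w = \<Phi> w' \<longrightarrow> (\<forall>q\<in>nmt_states T. \<forall>p. ?P q w p = ?P q w' p)"
    using assms(1) unfolding recog_def by (elim exE conjE) (rule that)
  have cong: "\<And>u u' v v'. u\<in>lists ?A \<Longrightarrow> u'\<in>lists ?A \<Longrightarrow> v\<in>lists ?A \<Longrightarrow> v'\<in>lists ?A \<Longrightarrow>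
        \<Phi> u = \<Phi> u' \<Longrightarrow> \<Phi> v = \<Phi> v' \<Longrightarrow> \<Phi> (u @ v) = \<Phi> (u' @ v')"
    using c by blast
  have det: "\<And>w w' q p. w\<in>lists ?A \<Longrightarrow> w'\<in>lists ?A \<Longrightarrow> \<Phi> w = \<Phi> w' \<Longrightarrow> q \<in> nmt_states T \<Longrightarrow> ?P q w p = ?P q w' p"
    using d by blast
  define rep where "rep r = (SOME w. w \<in> lists ?A \<and> \<Phi> w = r)" for r
  have rep: "rep (\<Phi> w) \<in> lists ?A \<and> \<Phi> (rep (\<Phi> w)) = \<Phi> w" if "w \<in> lists ?A" for w
    unfolding rep_def by (rule someI[of _ w]) (use that in auto)
  define emb where "emb u = map (\<lambda>a::'a. (a, [] :: nat list)) u" for u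
  have emb: "emb u \<in> lists ?A" for u unfolding emb_def by auto
  define d where "d q a = \<Phi> (rep q @ [(a, [])])" for q a
  define Fs where "Fs = {q \<in> \<Phi> ` lists ?A. \<exists>p. ?P (nmt_init T) (rep q) p}"
  have run: "fold (\<lambda>a q. d q a) u (\<Phi> []) = \<Phi> (emb u)" for u
  proof (induction u rule: rev_induct)
    case Nil then show ?case by (simp add: emb_def)
  next
    case (snoc a u)
    have "fold (\<lambda>a q. d q a) (u @ [a]) (\<Phi> []) = \<Phi> (rep (\<Phi> (emb u)) @ [(a, [])])"
      using snoc by (simp add: d_def)
    also have "\<dots> = \<Phi> (emb u @ [(a, [])])"
      by (rule cong) (use rep[OF emb] emb in auto)
    finally show ?case by (simp add: emb_def)
  qed
  show ?thesis unfolding regular_lang_def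
  proof (intro exI conjI)
    show "finite (\<Phi> ` lists ?A)" by (fact fin)
    show "\<Phi> [] \<in> \<Phi> ` lists ?A" by auto
    show "Fs \<subseteq> \<Phi> ` lists ?A" unfolding Fs_def by auto
    show "\<forall>q\<in>\<Phi> ` lists ?A. \<forall>a. d q a \<in> \<Phi> ` lists ?A"
    proof (intro ballI allI)
      fix q a assume "q \<in> \<Phi> ` lists ?A"
      then obtain w where w: "w \<in> lists ?A" "q = \<Phi> w" by auto
      then show "d q a \<in> \<Phi> ` lists ?A" unfolding d_def using rep[OF w(1)] by auto
    qed
    show "nmt_dom T = {w. fold (\<lambda>a q. d q a) w (\<Phi> []) \<in> Fs}"
    proof (rule set_eqI)
      fix u
      have "(\<exists>p. ?P (nmt_init T) (rep (\<Phi> (emb u))) p) \<longleftrightarrow> (\<exists>p. ?P (nmt_init T) (emb u) p)"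
        using det[OF conjunct1[OF rep[OF emb]] emb _ q0] rep[OF emb] by auto
      then show "u \<in> nmt_dom T \<longleftrightarrow> u \<in> {w. fold (\<lambda>a q. d q a) w (\<Phi> []) \<in> Fs}"
        unfolding nmt_dom_def Fs_def run using emb[of u]
        by (auto simp: emb_def)
    qed
  qed
qed


lemma path_iff:
  "(\<exists>cfs outs. length cfs = Suc (length outs) \<and> cfs ! 0 = a \<and>
      (\<forall>j<length outs. R (cfs ! j) (outs ! j) (cfs ! Suc j)) \<and> last cfs = b)
   \<longleftrightarrow> (\<lambda>x y. \<exists>ob. R x ob y)\<^sup>*\<^sup>* a b"
proof
  assume "\<exists>cfs outs. length cfs = Suc (length outs) \<and> cfs ! 0 = a \<and>
      (\<forall>j<length outs. R (cfs ! j) (outs ! j) (cfs ! Suc j)) \<and> last cfs = b"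
  then obtain cfs outs where h: "length cfs = Suc (length outs)" "cfs ! 0 = a"
      "\<forall>j<length outs. R (cfs ! j) (outs ! j) (cfs ! Suc j)" "last cfs = b" by blast
  then show "(\<lambda>x y. \<exists>ob. R x ob y)\<^sup>*\<^sup>* a b"
  proof (induction outs arbitrary: cfs a)
    case Nil
    then obtain c where "cfs = [c]" by (cases cfs) auto
    with Nil show ?case by simp
  next
    case (Cons ob outs)
    then obtain cfs' where cfs: "cfs = a # cfs'" by (cases cfs) auto
    have l: "length cfs' = Suc (length outs)" using Cons.prems(1) cfs by simp
    have st: "R a ob (cfs' ! 0)" using Cons.prems(3) cfs by (metis Cons.prems(2) length_greater_0_conv list.distinct(1) nth_Cons_0 nth_Cons_Suc)
    have "\<forall>j<length outs. R (cfs' ! j) (outs ! j) (cfs' ! Suc j)"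
    proof (intro allI impI)
      fix j assume "j < length outs"
      then have "R (cfs ! Suc j) ((ob # outs) ! Suc j) (cfs ! Suc (Suc j))" using Cons.prems(3) by (metis Suc_less_eq length_Cons nth_Cons_Suc)
      then show "R (cfs' ! j) (outs ! j) (cfs' ! Suc j)" using cfs by simp
    qed
    moreover have "last cfs' = b" using Cons.prems(4) cfs l by (metis last_ConsR list.size(3) nat.distinct(1))
    ultimately have "(\<lambda>x y. \<exists>ob. R x ob y)\<^sup>*\<^sup>* (cfs' ! 0) b" using Cons.IH l by blast
    then show ?case using st converse_rtranclp_into_rtranclp[of "\<lambda>x y. \<exists>ob. R x ob y" a "cfs' ! 0" b] by blast
  qed
next
  assume "(\<lambda>x y. \<exists>ob. R x ob y)\<^sup>*\<^sup>* a b"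
  then show "\<exists>cfs outs. length cfs = Suc (length outs) \<and> cfs ! 0 = a \<and>
      (\<forall>j<length outs. R (cfs ! j) (outs ! j) (cfs ! Suc j)) \<and> last cfs = b"
  proof (induction rule: rtranclp_induct)
    case base
    show ?case by (intro exI[of _ "[a]"] exI[of _ "[]"]) simp
  next
    case (step y z)
    then obtain cfs outs where h: "length cfs = Suc (length outs)" "cfs ! 0 = a"
      "\<forall>j<length outs. R (cfs ! j) (outs ! j) (cfs ! Suc j)" "last cfs = y" by blast
    obtain ob where o: "R y ob z" using step by blast
    have ne: "cfs \<noteq> []" using h(1) by auto
    have ly: "cfs ! length outs = y" using h(1,4) ne by (simp add: last_conv_nth)
    show ?case
    proof (intro exI[of _ "cfs @ [z]"] exI[of _ "outs @ [ob]"] conjI allI impI)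
      show "length (cfs @ [z]) = Suc (length (outs @ [ob]))" using h(1) by simp
      show "(cfs @ [z]) ! 0 = a" using h(2) ne by (simp add: nth_append)
      show "last (cfs @ [z]) = z" by simp
      fix j assume j: "j < length (outs @ [ob])"
      show "R ((cfs @ [z]) ! j) ((outs @ [ob]) ! j) ((cfs @ [z]) ! Suc j)"
      proof (cases "j < length outs")
        case True
        then show ?thesis using h(1,3) by (simp add: nth_append)
      next
        case False
        then have "j = length outs" using j by simp
        then show ?thesis using h(1) ly o by (simp add: nth_append)
      qed
    qed
  qed
qed

lemma nmt_op_final: "nmt_op T q w r \<Longrightarrow> snd r \<in> nmt_final T"
  by (cases T) (auto simp: Let_def)

lemma recog_simple:
  assumes wf: "nmt_wf (Simple Q q0 F \<delta> \<mu>)"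
  shows "recog A (nmt_states (Simple Q q0 F \<delta> \<mu>)) (\<lambda>q w p. \<exists>x. nmt_op (Simple Q q0 F \<delta> \<mu>) q w (x, p))"
proof -
  have finQ: "finite Q" and cl: "\<And>q a. q \<in> Q \<Longrightarrow> \<delta> q a \<in> Q" using wf by auto
  define run where "run u s = fold (\<lambda>a s. \<delta> s (Let a)) u s" for u s
  have runQ: "s \<in> Q \<Longrightarrow> run u s \<in> Q" for u s
    unfolding run_def by (induction u arbitrary: s) (auto intro: cl)
  have runapp: "run (u @ v) s = run v (run u s)" for u v s unfolding run_def by simp
  define \<Psi> where "\<Psi> u = (\<lambda>s. if s \<in> Q then run u s else undefined)" for u
  have op: "(\<exists>x. nmt_op (Simple Q q0 F \<delta> \<mu>) q w (x, p)) \<longleftrightarrow>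
      (\<delta> (run w (\<delta> q LEnd)) REnd \<in> F \<and> p = \<delta> (run w (\<delta> q LEnd)) REnd)" for q w p
    by (auto simp: run_def Let_def fold_map comp_def)
  show ?thesis
  proof (rule recogI[of \<Psi>])
    have "\<Psi> ` lists A \<subseteq> {f. \<forall>x. (x \<in> Q \<longrightarrow> f x \<in> Q) \<and> (x \<notin> Q \<longrightarrow> f x = undefined)}"
      by (auto simp: \<Psi>_def runQ)
    then show "finite (\<Psi> ` lists A)"
      using finite_set_of_finite_funs[OF finQ finQ] finite_subset by blast
  next
    fix u u' v v' assume "\<Psi> u = \<Psi> u'" "\<Psi> v = \<Psi> v'"
    then have e: "\<And>s. s \<in> Q \<Longrightarrow> run u s = run u' s" "\<And>s. s \<in> Q \<Longrightarrow> run v s = run v' s"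
      unfolding \<Psi>_def by (metis)+
    show "\<Psi> (u @ v) = \<Psi> (u' @ v')"
      unfolding \<Psi>_def runapp using e runQ by (auto intro!: ext)
  next
    fix w w' q p assume "\<Psi> w = \<Psi> w'" "q \<in> nmt_states (Simple Q q0 F \<delta> \<mu>)"
    then have "run w (\<delta> q LEnd) = run w' (\<delta> q LEnd)"
      unfolding \<Psi>_def using cl by simp (metis)
    then show "(\<exists>x. nmt_op (Simple Q q0 F \<delta> \<mu>) q w (x, p)) = (\<exists>x. nmt_op (Simple Q q0 F \<delta> \<mu>) q w' (x, p))"
      unfolding op by simp
  qed
qed


fun ann :: "'a letter \<Rightarrow> nat \<Rightarrow> 'a letter" where
  "ann (x, cs) c = (x, c # cs)"

definition annset :: "'a letter set \<Rightarrow> nat set \<Rightarrow> 'a letter set" where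
  "annset A C = (\<lambda>(l, c). ann l c) ` (A \<times> C)"

lemma annotate_Cons: "annotate (l # w) (c # v) = ann l c # annotate w v"
  by (cases l) (simp add: annotate_def)

lemma annotate_Nil: "annotate [] v = []"
  by (simp add: annotate_def)

lemma annotate_lists: "w \<in> lists A \<Longrightarrow> set v \<subseteq> C \<Longrightarrow> annotate w v \<in> lists (annset A C)"
proof (induction w arbitrary: v)
  case Nil then show ?case by (simp add: annotate_Nil)
next
  case (Cons l w)
  show ?case
  proof (cases v)
    case Nil then show ?thesis by (simp add: annotate_def)
  next
    case (Cons c v')
    then show ?thesis using Cons.prems Cons.IH[of v'] 
      by (auto simp: annotate_Cons annset_def)
  qed
qed

lemma annotate_split: "length y = m \<Longrightarrow> m \<le> length w \<Longrightarrow>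
   annotate w (y @ V) = annotate (take m w) y @ annotate (drop m w) V"
proof -
  assume "length y = m" "m \<le> length w"
  then have "zip w (y @ V) = zip (take m w) y @ zip (drop m w) V"
    by (metis append_take_drop_id length_take min.absorb2 zip_append)
  then show ?thesis by (simp add: annotate_def)
qed

datatype outc = Ret nat | Acc nat

locale nctx =
  fixes C :: "nat set" and c0 :: nat and Q :: "nat set" and F :: "nat set"
    and \<delta> :: "nat \<Rightarrow> 'a letter option \<Rightarrow> nat \<Rightarrow> (nat option \<times> nat) option"
    and dc :: "nat \<Rightarrow> nat \<Rightarrow> nat" and dr :: "nat \<Rightarrow> nat \<Rightarrow> nat \<Rightarrow> nat"
    and \<mu> :: "nat \<Rightarrow> 'a letter option \<Rightarrow> nat \<Rightarrow> 'g list"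
    and T' :: "('a, 'g) nmt"
    and A :: "'a letter set" and \<Phi>' :: "'a letter list \<Rightarrow> nat"
  assumes finC: "finite C" and c0C: "c0 \<in> C" and finQ: "finite Q" and FQ: "F \<subseteq> Q"
    and wf_drop: "\<And>q a c c' q'. q \<in> Q \<Longrightarrow> c \<in> C \<Longrightarrow> \<delta> q a c = Some (Some c', q') \<Longrightarrow> c' \<in> C \<and> q' \<in> Q"
    and wf_lift: "\<And>q a c q'. q \<in> Q \<Longrightarrow> c \<in> C \<Longrightarrow> \<delta> q a c = Some (None, q') \<Longrightarrow> q' \<in> Q"
    and wf_dc: "\<And>q c. q \<in> Q \<Longrightarrow> c \<in> C \<Longrightarrow> dc q c \<in> nmt_states T'"
    and wf_dr: "\<And>q c p. q \<in> Q \<Longrightarrow> c \<in> C \<Longrightarrow> p \<in> nmt_final T' \<Longrightarrow> dr q c p \<in> Q"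
    and fin\<Phi>: "finite (\<Phi>' ` lists (annset A C))"
    and cong\<Phi>: "\<And>u u' v v'. u \<in> lists (annset A C) \<Longrightarrow> u' \<in> lists (annset A C) \<Longrightarrow>
        v \<in> lists (annset A C) \<Longrightarrow> v' \<in> lists (annset A C) \<Longrightarrow>
        \<Phi>' u = \<Phi>' u' \<Longrightarrow> \<Phi>' v = \<Phi>' v' \<Longrightarrow> \<Phi>' (u @ v) = \<Phi>' (u' @ v')"
    and det\<Phi>: "\<And>w w' q p. w \<in> lists (annset A C) \<Longrightarrow> w' \<in> lists (annset A C) \<Longrightarrow>
        \<Phi>' w = \<Phi>' w' \<Longrightarrow> q \<in> nmt_states T' \<Longrightarrow>
        (\<exists>x. nmt_op T' q w (x, p)) = (\<exists>x. nmt_op T' q w' (x, p))"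
begin

definition P' :: "nat \<Rightarrow> 'a letter list \<Rightarrow> nat \<Rightarrow> bool" where
  "P' q w p \<longleftrightarrow> (\<exists>x. nmt_op T' q w (x, p))"

definition rep :: "nat \<Rightarrow> 'a letter list" where
  "rep \<rho> = (SOME w. w \<in> lists (annset A C) \<and> \<Phi>' w = \<rho>)"

definition ext :: "'a letter \<Rightarrow> nat \<Rightarrow> nat \<Rightarrow> nat" where
  "ext l c \<rho> = \<Phi>' (ann l c # rep \<rho>)"

definition Dom :: "(nat \<times> nat \<times> nat) set" where
  "Dom = Q \<times> C \<times> \<Phi>' ` lists (annset A C)"

definition Out :: "outc set" where
  "Out = Ret ` Q \<union> Acc ` Q"

definition B0 :: "nat \<times> nat \<times> nat \<Rightarrow> outc set" where
  "B0 = (\<lambda>(s, c, \<rho>). if (s, c, \<rho>) \<in> Dom then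
      (if s \<in> F then {Acc s} else {Ret (dr s c p) | p. P' (dc s c) (rep \<rho>) p}) else {})"

definition lstep :: "(nat \<times> nat \<times> nat \<Rightarrow> outc set) \<Rightarrow> 'a letter option \<Rightarrow> nat \<Rightarrow> nat \<Rightarrow> nat \<Rightarrow> nat \<Rightarrow> bool" where
  "lstep B l c \<rho> s t \<longleftrightarrow> s \<notin> F \<and> (\<exists>c'' q'. \<delta> s l c = Some (Some c'', q') \<and> Ret t \<in> B (q', c'', \<rho>))"

definition LoopOut :: "(nat \<times> nat \<times> nat \<Rightarrow> outc set) \<Rightarrow> 'a letter option \<Rightarrow> nat \<Rightarrow> nat \<Rightarrow> nat \<Rightarrow> outc set" where
  "LoopOut B l c \<rho> s = {r. \<exists>t. (lstep B l c \<rho>)\<^sup>*\<^sup>* s t \<and>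
     (t \<in> F \<and> r = Acc t \<or>
      t \<notin> F \<and> ((\<exists>q'. \<delta> t l c = Some (None, q') \<and> r = Ret q') \<or>
                 (\<exists>c'' q' f. \<delta> t l c = Some (Some c'', q') \<and> Acc f \<in> B (q', c'', \<rho>) \<and> r = Acc f)))}"

definition Step :: "(nat \<times> nat \<times> nat \<Rightarrow> outc set) \<Rightarrow> 'a letter \<Rightarrow> nat \<times> nat \<times> nat \<Rightarrow> outc set" where
  "Step B l = (\<lambda>(s, c, \<rho>). if (s, c, \<rho>) \<in> Dom then LoopOut B (Some l) c (ext l c \<rho>) s else {})"

definition BSp :: "(nat \<times> nat \<times> nat \<Rightarrow> outc set) set" where
  "BSp = {B. (\<forall>x. x \<notin> Dom \<longrightarrow> B x = {}) \<and> (\<forall>x. B x \<subseteq> Out)}"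

lemma rep: "w \<in> lists (annset A C) \<Longrightarrow> rep (\<Phi>' w) \<in> lists (annset A C) \<and> \<Phi>' (rep (\<Phi>' w)) = \<Phi>' w"
  unfolding rep_def by (rule someI[of _ w]) simp

lemma finDom: "finite Dom"
  unfolding Dom_def using finQ finC fin\<Phi> by simp

lemma finOut: "finite Out"
  unfolding Out_def using finQ by simp

lemma finBSp: "finite BSp"
proof -
  have "BSp \<subseteq> {f. \<forall>x. (x \<in> Dom \<longrightarrow> f x \<in> Pow Out) \<and> (x \<notin> Dom \<longrightarrow> f x = {})}"
    unfolding BSp_def Pow_def by blast
  then show ?thesis using finite_set_of_finite_funs[OF finDom, of "Pow Out" "{}"] finOut
    finite_subset by blast
qed

lemma Out_Ret: "Ret t \<in> Out \<Longrightarrow> t \<in> Q" and Out_Acc: "Acc t \<in> Out \<Longrightarrow> t \<in> Q"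
  unfolding Out_def by auto

lemma B0_BSp: "B0 \<in> BSp"
  unfolding BSp_def
proof (intro CollectI conjI allI impI)
  fix x :: "nat \<times> nat \<times> nat"
  show "x \<notin> Dom \<Longrightarrow> B0 x = {}" by (cases x) (auto simp: B0_def)
  obtain s c \<rho> where x: "x = (s, c, \<rho>)" by (cases x)
  show "B0 x \<subseteq> Out"
  proof (cases "(s, c, \<rho>) \<in> Dom")
    case True
    then have sc: "s \<in> Q" "c \<in> C" by (auto simp: Dom_def)
    have "dr s c p \<in> Q" if "P' (dc s c) (rep \<rho>) p" for p
      using that nmt_op_final[of T'] wf_dr[OF sc] unfolding P'_def by fastforce
    then show ?thesis using True sc x by (auto simp: B0_def Out_def)
  next
    case False then show ?thesis using x by (auto simp: B0_def)
  qed
qed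

lemma BSp_Ret: "B \<in> BSp \<Longrightarrow> Ret t \<in> B x \<Longrightarrow> t \<in> Q"
  unfolding BSp_def using Out_Ret by blast

lemma BSp_Acc: "B \<in> BSp \<Longrightarrow> Acc t \<in> B x \<Longrightarrow> t \<in> Q"
  unfolding BSp_def using Out_Acc by blast

lemma lstep_Q: "(lstep B l c \<rho>)\<^sup>*\<^sup>* s t \<Longrightarrow> B \<in> BSp \<Longrightarrow> s \<in> Q \<Longrightarrow> t \<in> Q"
  by (induction rule: rtranclp_induct) (auto simp: lstep_def dest: BSp_Ret)

lemma LoopOut_Out: "B \<in> BSp \<Longrightarrow> s \<in> Q \<Longrightarrow> c \<in> C \<Longrightarrow> LoopOut B l c \<rho> s \<subseteq> Out"
proof
  fix r assume B: "B \<in> BSp" and s: "s \<in> Q" and c: "c \<in> C" and o: "r \<in> LoopOut B l c \<rho> s"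
  then obtain t where t: "(lstep B l c \<rho>)\<^sup>*\<^sup>* s t" and
    h: "t \<in> F \<and> r = Acc t \<or>
      t \<notin> F \<and> ((\<exists>q'. \<delta> t l c = Some (None, q') \<and> r = Ret q') \<or>
                 (\<exists>c'' q' f. \<delta> t l c = Some (Some c'', q') \<and> Acc f \<in> B (q', c'', \<rho>) \<and> r = Acc f))"
    unfolding LoopOut_def by blast
  have tQ: "t \<in> Q" using lstep_Q[OF t B s] .
  from h show "r \<in> Out"
    using tQ c wf_lift BSp_Acc[OF B] by (auto simp: Out_def)
qed

lemma Step_BSp: "B \<in> BSp \<Longrightarrow> Step B l \<in> BSp"
  unfolding BSp_def[of] Step_def
  using LoopOut_Out[of B] by (auto simp: Dom_def BSp_def)

lemma fold_BSp: "B \<in> BSp \<Longrightarrow> fold (\<lambda>l B. Step B l) u B \<in> BSp"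
  by (induction u arbitrary: B) (auto intro: Step_BSp)

lemma LoopOut_prepend: "lstep B l c \<rho> s t \<Longrightarrow> LoopOut B l c \<rho> t \<subseteq> LoopOut B l c \<rho> s"
  unfolding LoopOut_def by (auto intro: converse_rtranclp_into_rtranclp)

end


context nctx
begin

definition St :: "'a letter list \<Rightarrow> config \<Rightarrow> config \<Rightarrow> bool" where
  "St w cf cf' \<longleftrightarrow> fst cf \<notin> F \<and> (\<exists>x. nmt_step (nmt_op T') \<delta> dc dr \<mu> w cf x cf')"

definition W :: "'a letter list \<Rightarrow> nat \<Rightarrow> config \<Rightarrow> config \<Rightarrow> bool" where
  "W w m a b \<longleftrightarrow> St w a b \<and> fst (snd b) \<le> m"

definition Sem :: "'a letter list \<Rightarrow> nat \<Rightarrow> config \<Rightarrow> nat list \<Rightarrow> outc \<Rightarrow> bool" where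
  "Sem w m cf V r \<longleftrightarrow> (\<exists>x. (W w m)\<^sup>*\<^sup>* cf x \<and>
     (case r of Acc f \<Rightarrow> fst x = f \<and> f \<in> F | Ret q \<Rightarrow> St w x (q, Suc m, V)))"

definition Bm :: "'a letter list \<Rightarrow> nat \<Rightarrow> nat \<times> nat \<times> nat \<Rightarrow> outc set" where
  "Bm w m = fold (\<lambda>l B. Step B l) (take m w) B0"

lemma St_shape:
  assumes "St w (s, i, v) (s', i', v')"
  shows "s \<notin> F \<and> v \<noteq> [] \<and> ((1 \<le> i \<and> i' = i - 1 \<and> (\<exists>c'. v' = c' # v)) \<or> (i' = Suc i \<and> v' = tl v))"
  using assms by (auto simp: St_def nmt_step_def)

lemma St_top: "St w a b \<Longrightarrow> fst (snd b) \<le> Suc (length w)"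
  by (cases a; cases b) (auto simp: St_def nmt_step_def)

lemma St_drop_inv:
  assumes "St w (s, i, c # v) (s', i', v')" "i' < i"
  shows "s \<notin> F \<and> i' = i - 1 \<and> (\<exists>c'. \<delta> s (pos_letter w i) c = Some (Some c', s') \<and> v' = c' # c # v)"
  using assms by (auto simp: St_def nmt_step_def)

lemma St_lift_inv:
  assumes "St w (s, i, c # v) (s', Suc i, v')" "1 \<le> i"
  shows "s \<notin> F \<and> \<delta> s (pos_letter w i) c = Some (None, s') \<and> v' = v"
  using assms by (auto simp: St_def nmt_step_def)

lemma St_dropI:
  "s \<notin> F \<Longrightarrow> Suc i \<le> length w + 1 \<Longrightarrow> \<delta> s (pos_letter w (Suc i)) c = Some (Some c', q') \<Longrightarrow>
   St w (s, Suc i, c # v) (q', i, c' # c # v)"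
  by (auto simp: St_def nmt_step_def)

lemma St_liftI:
  "s \<notin> F \<Longrightarrow> 1 \<le> i \<Longrightarrow> i \<le> length w \<Longrightarrow> \<delta> s (pos_letter w i) c = Some (None, q') \<Longrightarrow>
   St w (s, i, c # v) (q', Suc i, v)"
  by (auto simp: St_def nmt_step_def)

lemma St_call_iff:
  "St w (s, 0, c # v) (q, Suc 0, v) \<longleftrightarrow> s \<notin> F \<and> (\<exists>p. P' (dc s c) (annotate w v) p \<and> q = dr s c p)"
  by (auto simp: St_def nmt_step_def P'_def)

lemma W_mono: "(W w m)\<^sup>*\<^sup>* a b \<Longrightarrow> (W w (Suc m))\<^sup>*\<^sup>* a b"
proof -
  have "W w m \<le> W w (Suc m)" by (auto simp: W_def)
  then show "(W w m)\<^sup>*\<^sup>* a b \<Longrightarrow> (W w (Suc m))\<^sup>*\<^sup>* a b"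
    using rtranclp_mono by (metis predicate2D)
qed

lemma W0_refl: "(W w 0)\<^sup>*\<^sup>* a x \<Longrightarrow> fst (snd a) = 0 \<Longrightarrow> x = a"
proof (induction rule: converse_rtranclp_induct)
  case base then show ?case by simp
next
  case (step a b)
  obtain s i v where a: "a = (s, i, v)" by (cases a)
  obtain s' i' v' where b: "b = (s', i', v')" by (cases b)
  from step(1) have "St w a b" "fst (snd b) \<le> 0" by (auto simp: W_def)
  then show ?case using St_shape[of w s i v s' i' v'] step(4) a b by auto
qed

lemma D0:
  assumes w: "w \<in> lists A" and s: "s \<in> Q" and c: "c \<in> C" and V: "set V \<subseteq> C"
  shows "r \<in> B0 (s, c, \<Phi>' (annotate w V)) \<longleftrightarrow> Sem w 0 (s, 0, c # V) V r"
proof -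
  have an: "annotate w V \<in> lists (annset A C)" using annotate_lists[OF w V] .
  have dom: "(s, c, \<Phi>' (annotate w V)) \<in> Dom" using s c an by (auto simp: Dom_def)
  have rp: "P' (dc s c) (rep (\<Phi>' (annotate w V))) p \<longleftrightarrow> P' (dc s c) (annotate w V) p" for p
    using det\<Phi>[OF conjunct1[OF rep[OF an]] an conjunct2[OF rep[OF an]] wf_dc[OF s c]]
    unfolding P'_def by simp
  have sem: "Sem w 0 (s, 0, c # V) V r \<longleftrightarrow>
      (case r of Acc f \<Rightarrow> s = f \<and> f \<in> F | Ret q \<Rightarrow> St w (s, 0, c # V) (q, Suc 0, V))"
    unfolding Sem_def using W0_refl[of w "(s, 0, c # V)"] by (cases r) auto
  show ?thesis
    unfolding sem using dom rp by (cases r) (auto simp: B0_def St_call_iff)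
qed

end


context nctx
begin

lemma Lsound:
  assumes m: "m \<le> length w"
    and D: "\<And>s c V r. s \<in> Q \<Longrightarrow> c \<in> C \<Longrightarrow> set V \<subseteq> C \<Longrightarrow>
        (r \<in> Bm w m (s, c, \<Phi>' (annotate (drop m w) V)) \<longleftrightarrow> Sem w m (s, m, c # V) V r)"
    and BB: "Bm w m \<in> BSp"
    and s: "s \<in> Q" and c: "c \<in> C" and V: "set V \<subseteq> C"
    and r: "r \<in> LoopOut (Bm w m) (pos_letter w (Suc m)) c (\<Phi>' (annotate (drop m w) (c # V))) s"
    and rl: "\<And>q. r = Ret q \<Longrightarrow> Suc m \<le> length w"
  shows "Sem w (Suc m) (s, Suc m, c # V) V r"
proof -
  define B where "B = Bm w m"
  define \<rho>' where "\<rho>' = \<Phi>' (annotate (drop m w) (c # V))"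
  define lt where "lt = pos_letter w (Suc m)"
  have cV: "set (c # V) \<subseteq> C" using c V by simp
  have Dm: "r' \<in> B (q', c'', \<rho>') \<longleftrightarrow> Sem w m (q', m, c'' # c # V) (c # V) r'"
    if "q' \<in> Q" "c'' \<in> C" for q' c'' r'
    using D[OF that cV] by (simp add: B_def \<rho>'_def)
  have path: "(W w (Suc m))\<^sup>*\<^sup>* (s, Suc m, c # V) (t, Suc m, c # V) \<and> t \<in> Q"
    if "(lstep B lt c \<rho>')\<^sup>*\<^sup>* s t" for t
    using that
  proof (induction rule: rtranclp_induct)
    case base show ?case using s by simp
  next
    case (step t t2)
    then have tQ: "t \<in> Q" and p1: "(W w (Suc m))\<^sup>*\<^sup>* (s, Suc m, c # V) (t, Suc m, c # V)" by auto
    from step(2) obtain c'' q' where tF: "t \<notin> F" and d: "\<delta> t lt c = Some (Some c'', q')"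
      and R: "Ret t2 \<in> B (q', c'', \<rho>')" unfolding lstep_def by blast
    have cq: "c'' \<in> C" "q' \<in> Q" using wf_drop[OF tQ c d] by auto
    from R Dm[OF cq(2) cq(1)] obtain y where y: "(W w m)\<^sup>*\<^sup>* (q', m, c'' # c # V) y"
      "St w y (t2, Suc m, c # V)" unfolding Sem_def by auto
    have s1: "W w (Suc m) (t, Suc m, c # V) (q', m, c'' # c # V)"
      unfolding W_def using St_dropI[OF tF _ d[unfolded lt_def]] m by auto
    have s2: "W w (Suc m) y (t2, Suc m, c # V)" using y(2) by (simp add: W_def)
    have "(W w (Suc m))\<^sup>*\<^sup>* (s, Suc m, c # V) (q', m, c'' # c # V)"
      using p1 s1 by (rule rtranclp.rtrancl_into_rtrancl)
    then have "(W w (Suc m))\<^sup>*\<^sup>* (s, Suc m, c # V) y"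
      using W_mono[OF y(1)] by (rule rtranclp_trans)
    then have "(W w (Suc m))\<^sup>*\<^sup>* (s, Suc m, c # V) (t2, Suc m, c # V)"
      using s2 by (rule rtranclp.rtrancl_into_rtrancl)
    moreover have "t2 \<in> Q" using BSp_Ret[OF BB[folded B_def] R] .
    ultimately show ?case by simp
  qed
  from r obtain t where t: "(lstep B lt c \<rho>')\<^sup>*\<^sup>* s t" and
    h: "t \<in> F \<and> r = Acc t \<or>
      t \<notin> F \<and> ((\<exists>q'. \<delta> t lt c = Some (None, q') \<and> r = Ret q') \<or>
                 (\<exists>c'' q' f. \<delta> t lt c = Some (Some c'', q') \<and> Acc f \<in> B (q', c'', \<rho>') \<and> r = Acc f))"
    unfolding LoopOut_def B_def \<rho>'_def lt_def by blast
  from path[OF t] have pt: "(W w (Suc m))\<^sup>*\<^sup>* (s, Suc m, c # V) (t, Suc m, c # V)" and tQ: "t \<in> Q"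
    by auto
  from h show ?thesis
  proof (elim disjE conjE exE)
    assume "t \<in> F" "r = Acc t"
    then show ?thesis unfolding Sem_def using pt by auto
  next
    fix q' assume tF: "t \<notin> F" and d: "\<delta> t lt c = Some (None, q')" and rq: "r = Ret q'"
    have "St w (t, Suc m, c # V) (q', Suc (Suc m), V)"
      using St_liftI[OF tF _ rl[OF rq] d[unfolded lt_def]] by simp
    then show ?thesis unfolding Sem_def using pt rq by auto
  next
    fix c'' q' f assume tF: "t \<notin> F" and d: "\<delta> t lt c = Some (Some c'', q')"
      and A: "Acc f \<in> B (q', c'', \<rho>')" and rf: "r = Acc f"
    have cq: "c'' \<in> C" "q' \<in> Q" using wf_drop[OF tQ c d] by auto
    from A Dm[OF cq(2) cq(1)] obtain y where y: "(W w m)\<^sup>*\<^sup>* (q', m, c'' # c # V) y"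
      "fst y = f" "f \<in> F" unfolding Sem_def by auto
    have s1: "W w (Suc m) (t, Suc m, c # V) (q', m, c'' # c # V)"
      unfolding W_def using St_dropI[OF tF _ d[unfolded lt_def]] m by auto
    have "(W w (Suc m))\<^sup>*\<^sup>* (s, Suc m, c # V) (q', m, c'' # c # V)"
      using pt s1 by (rule rtranclp.rtrancl_into_rtrancl)
    then have "(W w (Suc m))\<^sup>*\<^sup>* (s, Suc m, c # V) y"
      using W_mono[OF y(1)] by (rule rtranclp_trans)
    then show ?thesis unfolding Sem_def using y rf by (intro exI[of _ y]) auto
  qed
qed

end


context nctx
begin

lemma Lcomplete:
  assumes m: "m \<le> length w"
    and D: "\<And>s c V r. s \<in> Q \<Longrightarrow> c \<in> C \<Longrightarrow> set V \<subseteq> C \<Longrightarrow>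
        (r \<in> Bm w m (s, c, \<Phi>' (annotate (drop m w) V)) \<longleftrightarrow> Sem w m (s, m, c # V) V r)"
    and BB: "Bm w m \<in> BSp"
    and s: "s \<in> Q" and c: "c \<in> C" and V: "set V \<subseteq> C"
    and sem: "Sem w (Suc m) (s, Suc m, c # V) V r"
  shows "r \<in> LoopOut (Bm w m) (pos_letter w (Suc m)) c (\<Phi>' (annotate (drop m w) (c # V))) s"
proof -
  define B where "B = Bm w m"
  define \<rho>' where "\<rho>' = \<Phi>' (annotate (drop m w) (c # V))"
  define lt where "lt = pos_letter w (Suc m)"
  define LO where "LO = LoopOut B lt c \<rho>'"
  have cV: "set (c # V) \<subseteq> C" using c V by simp
  have Dm: "r' \<in> B (q', c'', \<rho>') \<longleftrightarrow> Sem w m (q', m, c'' # c # V) (c # V) r'"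
    if "q' \<in> Q" "c'' \<in> C" for q' c'' r'
    using D[OF that cV] by (simp add: B_def \<rho>'_def)
  define TG where "TG x \<longleftrightarrow> (case r of Acc f \<Rightarrow> fst x = f \<and> f \<in> F | Ret q \<Rightarrow> St w x (q, Suc (Suc m), V))" for x
  define Alt where "Alt a \<longleftrightarrow> (\<exists>y. (W w m)\<^sup>*\<^sup>* a y \<and> (\<exists>f. r = Acc f \<and> fst y = f \<and> f \<in> F)) \<or>
      (\<exists>y t. (W w m)\<^sup>*\<^sup>* a y \<and> St w y (t, Suc m, c # V) \<and> (t \<in> Q \<longrightarrow> r \<in> LO t))" for a
  from sem obtain x where px: "(W w (Suc m))\<^sup>*\<^sup>* (s, Suc m, c # V) x" and tg: "TG x"
    unfolding Sem_def TG_def by auto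
  have key: "(fst (snd a) = Suc m \<and> snd (snd a) = c # V \<longrightarrow> fst a \<in> Q \<longrightarrow> r \<in> LO (fst a)) \<and>
      (fst (snd a) \<le> m \<and> drop (m + 1 - fst (snd a)) (snd (snd a)) = c # V \<longrightarrow> Alt a)"
    if "(W w (Suc m))\<^sup>*\<^sup>* a x" for a
    using that
  proof (induction rule: converse_rtranclp_induct)
    case base
    obtain xs xi xv where x: "x = (xs, xi, xv)" by (cases x)
    show ?case
    proof (intro conjI impI)
      assume h: "fst (snd x) = Suc m \<and> snd (snd x) = c # V" and xQ: "fst x \<in> Q"
      show "r \<in> LO (fst x)"
      proof (cases r)
        case (Acc f)
        then show ?thesis using tg unfolding TG_def LO_def LoopOut_def by auto
      next
        case (Ret q)
        then have "St w (xs, Suc m, c # V) (q, Suc (Suc m), V)" using tg h x by (simp add: TG_def)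
        from St_lift_inv[OF this] have "xs \<notin> F" "\<delta> xs lt c = Some (None, q)"
          by (auto simp: lt_def)
        then show ?thesis using Ret x unfolding LO_def LoopOut_def by auto
      qed
    next
      assume h: "fst (snd x) \<le> m \<and> drop (m + 1 - fst (snd x)) (snd (snd x)) = c # V"
      show "Alt x"
      proof (cases r)
        case (Acc f)
        then show ?thesis using tg unfolding TG_def Alt_def by (intro disjI1 exI[of _ x]) auto
      next
        case (Ret q)
        then have "St w (xs, xi, xv) (q, Suc (Suc m), V)" using tg x by (simp add: TG_def)
        from St_shape[OF this] have False using h x by auto
        then show ?thesis ..
      qed
    qed
  next
    case (step a a')
    obtain as ai av where a: "a = (as, ai, av)" by (cases a)
    obtain bs bi bv where a': "a' = (bs, bi, bv)" by (cases a')
    from step(1) have st: "St w (as, ai, av) (bs, bi, bv)" and bi: "bi \<le> Suc m"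
      unfolding W_def a a' by auto
    note sh = St_shape[OF st]
    note IH = step(3)[unfolded a', simplified]
    show ?case
    proof (intro conjI impI)
      assume h: "fst (snd a) = Suc m \<and> snd (snd a) = c # V" and aQ: "fst a \<in> Q"
      then have ai: "ai = Suc m" and av: "av = c # V" and asQ: "as \<in> Q" using a by auto
      have bim: "bi = m" using sh bi ai by auto
      from St_drop_inv[of w as ai c V bs bi bv] st bim ai av
      obtain c'' where asF: "as \<notin> F" and d: "\<delta> as lt c = Some (Some c'', bs)"
        and bv: "bv = c'' # c # V" by (auto simp: lt_def)
      have cq: "c'' \<in> C" "bs \<in> Q" using wf_drop[OF asQ c d] by auto
      have "Alt (bs, m, c'' # c # V)" using IH bim bv by simp
      then show "r \<in> LO (fst a)"
        unfolding Alt_def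
      proof (elim disjE exE conjE)
        fix y f assume y: "(W w m)\<^sup>*\<^sup>* (bs, m, c'' # c # V) y" "r = Acc f" "fst y = f" "f \<in> F"
        then have "Sem w m (bs, m, c'' # c # V) (c # V) (Acc f)" unfolding Sem_def by (intro exI[of _ y]) auto
        then have "Acc f \<in> B (bs, c'', \<rho>')" using Dm[OF cq(2) cq(1)] by simp
        then show ?thesis using y asF d a unfolding LO_def LoopOut_def by auto
      next
        fix y t assume y: "(W w m)\<^sup>*\<^sup>* (bs, m, c'' # c # V) y" "St w y (t, Suc m, c # V)"
          and tl: "t \<in> Q \<longrightarrow> r \<in> LO t"
        then have "Sem w m (bs, m, c'' # c # V) (c # V) (Ret t)" using y unfolding Sem_def by (intro exI[of _ y]) simp
        then have R: "Ret t \<in> B (bs, c'', \<rho>')" using Dm[OF cq(2) cq(1)] by simp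
        have "t \<in> Q" using BSp_Ret[OF BB[folded B_def] R] .
        with tl have "r \<in> LO t" by simp
        moreover have "lstep B lt c \<rho>' as t" unfolding lstep_def using asF d R by auto
        ultimately show ?thesis using LoopOut_prepend[of B lt c \<rho>' as t] a unfolding LO_def by auto
      qed
    next
      assume h: "fst (snd a) \<le> m \<and> drop (m + 1 - fst (snd a)) (snd (snd a)) = c # V"
      then have aim: "ai \<le> m" and inv: "drop (m + 1 - ai) av = c # V" using a by auto
      show "Alt a"
      proof (cases "bi \<le> m")
        case True
        have "drop (m + 1 - bi) bv = c # V"
          using sh
        proof (elim conjE disjE exE)
          fix c' assume "1 \<le> ai" "bi = ai - 1" "bv = c' # av"
          moreover have "m + 1 - bi = Suc (m + 1 - ai)" using \<open>1 \<le> ai\<close> \<open>bi = ai - 1\<close> aim by simp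
          ultimately show ?thesis using inv by simp
        next
          assume "bi = Suc ai" "bv = tl av"
          moreover have "m + 1 - ai = Suc (m + 1 - bi)" using \<open>bi = Suc ai\<close> True by simp
          ultimately show ?thesis using inv by (simp add: drop_Suc)
        qed
        then have "Alt a'" using IH True a' by simp
        moreover have "W w m a a'" using st True a a' by (simp add: W_def)
        ultimately show ?thesis unfolding Alt_def
          using converse_rtranclp_into_rtranclp[of "W w m" a a'] by blast
      next
        case False
        then have bi': "bi = Suc m" using bi by simp
        then have "ai = m" "bv = tl av" using sh aim by auto
        then have bv: "bv = c # V" using inv by (simp add: drop_Suc)
        have "bs \<in> Q \<longrightarrow> r \<in> LO bs" using IH bi' bv by simp
        moreover have "St w a (bs, Suc m, c # V)" using st a bi' bv by simp
        ultimately show ?thesis unfolding Alt_def by blast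
      qed
    qed
  qed
  from key[OF px] s show ?thesis unfolding LO_def B_def \<rho>'_def lt_def by simp
qed

end


context nctx
begin

lemma Bm_BSp: "Bm w m \<in> BSp"
  unfolding Bm_def by (rule fold_BSp[OF B0_BSp])

lemma D:
  assumes w: "w \<in> lists A"
  shows "m \<le> length w \<Longrightarrow> s \<in> Q \<Longrightarrow> c \<in> C \<Longrightarrow> set V \<subseteq> C \<Longrightarrow>
    (r \<in> Bm w m (s, c, \<Phi>' (annotate (drop m w) V)) \<longleftrightarrow> Sem w m (s, m, c # V) V r)"
proof (induction m arbitrary: s c V r)
  case 0
  then show ?case using D0[OF w] by (simp add: Bm_def)
next
  case (Suc m)
  have mw: "m < length w" using Suc.prems by simp
  have IH: "\<And>s c V r. s \<in> Q \<Longrightarrow> c \<in> C \<Longrightarrow> set V \<subseteq> C \<Longrightarrow>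
      (r \<in> Bm w m (s, c, \<Phi>' (annotate (drop m w) V)) \<longleftrightarrow> Sem w m (s, m, c # V) V r)"
    using Suc.IH mw by simp
  have Bm_Suc: "Bm w (Suc m) = Step (Bm w m) (w ! m)"
    by (simp add: Bm_def take_Suc_conv_app_nth[OF mw])
  define \<rho> where "\<rho> = \<Phi>' (annotate (drop (Suc m) w) V)"
  have an: "annotate (drop (Suc m) w) V \<in> lists (annset A C)"
    using annotate_lists[of "drop (Suc m) w" A V C] w Suc.prems(4)
    by (meson in_lists_conv_set in_set_dropD)
  have dom: "(s, c, \<rho>) \<in> Dom" using Suc.prems(2,3) an by (auto simp: Dom_def \<rho>_def)
  have wm: "w ! m \<in> A" using w mw by (simp add: in_lists_conv_set)
  have annA: "ann (w ! m) c \<in> annset A C" using wm Suc.prems(3) by (force simp: annset_def)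
  have dropm: "annotate (drop m w) (c # V) = ann (w ! m) c # annotate (drop (Suc m) w) V"
    by (simp add: Cons_nth_drop_Suc[OF mw, symmetric] annotate_Cons)
  have ex: "ext (w ! m) c \<rho> = \<Phi>' (annotate (drop m w) (c # V))"
  proof -
    have "\<Phi>' ([ann (w ! m) c] @ rep \<rho>) = \<Phi>' ([ann (w ! m) c] @ annotate (drop (Suc m) w) V)"
      by (rule cong\<Phi>) (use annA rep[OF an] an in \<open>auto simp: \<rho>_def\<close>)
    then show ?thesis by (simp add: ext_def dropm)
  qed
  have pl: "pos_letter w (Suc m) = Some (w ! m)" using mw by (simp add: pos_letter_def)
  have eq: "Bm w (Suc m) (s, c, \<rho>) =
      LoopOut (Bm w m) (pos_letter w (Suc m)) c (\<Phi>' (annotate (drop m w) (c # V))) s"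
    using dom by (simp add: Bm_Suc Step_def ex pl)
  show ?case
    unfolding \<rho>_def[symmetric] eq
    using Lsound[OF less_imp_le[OF mw] IH Bm_BSp Suc.prems(2,3,4)]
          Lcomplete[OF less_imp_le[OF mw] IH Bm_BSp Suc.prems(2,3,4)] Suc.prems(1)
    by blast
qed

lemma St_eq_W: "St w = W w (Suc (length w))"
  using St_top by (auto simp: W_def fun_eq_iff)

lemma top:
  assumes w: "w \<in> lists A" and q: "q \<in> Q"
  shows "(\<exists>x. nmt_op (Nest C c0 Q q0 F \<delta> dc dr \<mu> T') q w (x, p)) \<longleftrightarrow>
    Acc p \<in> LoopOut (fold (\<lambda>l B. Step B l) w B0) None c0 (\<Phi>' []) q"
proof -
  let ?R = "\<lambda>x ob y. fst x \<notin> F \<and> nmt_step (nmt_op T') \<delta> dc dr \<mu> w x ob y"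
  let ?init = "(q, length w + 1, [c0])"
  have Req: "(\<lambda>x y. \<exists>ob. ?R x ob y) = St w" by (auto simp: St_def fun_eq_iff)
  have "(\<exists>x. nmt_op (Nest C c0 Q q0 F \<delta> dc dr \<mu> T') q w (x, p)) \<longleftrightarrow>
      (\<exists>b. (St w)\<^sup>*\<^sup>* ?init b \<and> fst b = p \<and> p \<in> F)"
  proof
    assume "\<exists>x. nmt_op (Nest C c0 Q q0 F \<delta> dc dr \<mu> T') q w (x, p)"
    then obtain x where "nmt_op (Nest C c0 Q q0 F \<delta> dc dr \<mu> T') q w (x, p)" by blast
    then have "\<exists>cfs outs. length cfs = length outs + 1 \<and> cfs ! 0 = ?init \<and>
      (\<forall>j<length outs. nmt_step (nmt_op T') \<delta> dc dr \<mu> w (cfs ! j) (outs ! j) (cfs ! Suc j)) \<and>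
      (\<forall>j<length outs. fst (cfs ! j) \<notin> F) \<and> fst (last cfs) \<in> F \<and> (x, p) = (concat outs, fst (last cfs))"
      by (simp only: nmt_op.simps)
    then obtain cfs outs where h: "length cfs = length outs + 1" "cfs ! 0 = ?init"
      "\<forall>j<length outs. nmt_step (nmt_op T') \<delta> dc dr \<mu> w (cfs ! j) (outs ! j) (cfs ! Suc j)"
      "\<forall>j<length outs. fst (cfs ! j) \<notin> F" "fst (last cfs) \<in> F" "(x, p) = (concat outs, fst (last cfs))"
      by (elim exE conjE) (rule that)
    have "length cfs = Suc (length outs) \<and> cfs ! 0 = ?init \<and>
      (\<forall>j<length outs. ?R (cfs ! j) (outs ! j) (cfs ! Suc j)) \<and> last cfs = last cfs"
      using h(1-4) by simp
    then have "(\<lambda>x y. \<exists>ob. ?R x ob y)\<^sup>*\<^sup>* ?init (last cfs)"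
      using path_iff[of ?init ?R "last cfs"] by blast
    then show "\<exists>b. (St w)\<^sup>*\<^sup>* ?init b \<and> fst b = p \<and> p \<in> F"
      using h(5,6) unfolding Req by (intro exI[of _ "last cfs"]) simp
  next
    assume "\<exists>b. (St w)\<^sup>*\<^sup>* ?init b \<and> fst b = p \<and> p \<in> F"
    then obtain b where b: "(St w)\<^sup>*\<^sup>* ?init b" "fst b = p" "p \<in> F" by blast
    then have "(\<lambda>x y. \<exists>ob. ?R x ob y)\<^sup>*\<^sup>* ?init b" unfolding Req by simp
    then obtain cfs outs where h: "length cfs = Suc (length outs)" "cfs ! 0 = ?init"
      "\<forall>j<length outs. ?R (cfs ! j) (outs ! j) (cfs ! Suc j)" "last cfs = b"
      using path_iff[of ?init ?R b] by blast
    have "nmt_op (Nest C c0 Q q0 F \<delta> dc dr \<mu> T') q w (concat outs, p)"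
      unfolding nmt_op.simps
      by (rule exI[of _ cfs], rule exI[of _ outs]) (use h b in simp)
    then show "\<exists>x. nmt_op (Nest C c0 Q q0 F \<delta> dc dr \<mu> T') q w (x, p)" by blast
  qed
  also have "\<dots> \<longleftrightarrow> Sem w (Suc (length w)) (q, Suc (length w), c0 # []) [] (Acc p)"
    unfolding Sem_def St_eq_W[symmetric] by simp
  also have "\<dots> \<longleftrightarrow> Acc p \<in> LoopOut (Bm w (length w)) (pos_letter w (Suc (length w))) c0
      (\<Phi>' (annotate (drop (length w) w) [c0])) q"
  proof
    have V0: "set ([]::nat list) \<subseteq> C" by simp
    note D' = D[OF w order_refl]
    show "Sem w (Suc (length w)) (q, Suc (length w), c0 # []) [] (Acc p) \<Longrightarrow>
      Acc p \<in> LoopOut (Bm w (length w)) (pos_letter w (Suc (length w))) c0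
      (\<Phi>' (annotate (drop (length w) w) [c0])) q"
      by (rule Lcomplete[OF order_refl D' Bm_BSp q c0C V0])
    show "Acc p \<in> LoopOut (Bm w (length w)) (pos_letter w (Suc (length w))) c0
      (\<Phi>' (annotate (drop (length w) w) [c0])) q \<Longrightarrow>
      Sem w (Suc (length w)) (q, Suc (length w), c0 # []) [] (Acc p)"
      by (rule Lsound[OF order_refl D' Bm_BSp q c0C V0]) simp_all
  qed
  also have "\<dots> \<longleftrightarrow> Acc p \<in> LoopOut (fold (\<lambda>l B. Step B l) w B0) None c0 (\<Phi>' []) q"
    by (simp add: Bm_def pos_letter_def annotate_Nil)
  finally show ?thesis .
qed

lemma recog_nest:
  "recog A Q (\<lambda>q w p. \<exists>x. nmt_op (Nest C c0 Q q0 F \<delta> dc dr \<mu> T') q w (x, p))"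
proof -
  define \<Psi> where "\<Psi> u = (\<lambda>B. if B \<in> BSp then fold (\<lambda>l B. Step B l) u B else undefined)" for u
  show ?thesis
  proof (rule recogI[of \<Psi>])
    have "\<Psi> ` lists A \<subseteq> {f. \<forall>x. (x \<in> BSp \<longrightarrow> f x \<in> BSp) \<and> (x \<notin> BSp \<longrightarrow> f x = undefined)}"
      by (auto simp: \<Psi>_def fold_BSp)
    then show "finite (\<Psi> ` lists A)"
      using finite_set_of_finite_funs[OF finBSp finBSp] finite_subset by blast
  next
    fix u u' v v' assume h: "\<Psi> u = \<Psi> u'" "\<Psi> v = \<Psi> v'"
    have e1: "fold (\<lambda>l B. Step B l) u B = fold (\<lambda>l B. Step B l) u' B" if "B \<in> BSp" for B
      using fun_cong[OF h(1), of B] that by (simp add: \<Psi>_def)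
    have e2: "fold (\<lambda>l B. Step B l) v B = fold (\<lambda>l B. Step B l) v' B" if "B \<in> BSp" for B
      using fun_cong[OF h(2), of B] that by (simp add: \<Psi>_def)
    show "\<Psi> (u @ v) = \<Psi> (u' @ v')"
      unfolding \<Psi>_def using e1 e2 fold_BSp by (auto intro!: ext)
  next
    fix w w' q p assume h: "w \<in> lists A" "w' \<in> lists A" "\<Psi> w = \<Psi> w'" "q \<in> Q"
    have "fold (\<lambda>l B. Step B l) w B0 = fold (\<lambda>l B. Step B l) w' B0"
      using fun_cong[OF h(3), of B0] B0_BSp by (simp add: \<Psi>_def)
    then show "(\<exists>x. nmt_op (Nest C c0 Q q0 F \<delta> dc dr \<mu> T') q w (x, p)) =
        (\<exists>x. nmt_op (Nest C c0 Q q0 F \<delta> dc dr \<mu> T') q w' (x, p))"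
      using top[OF h(1) h(4)] top[OF h(2) h(4)] by simp
  qed
qed

end


lemma main_recog:
  fixes T :: "('a, 'g) nmt" and A :: "'a letter set"
  shows "nmt_wf T \<Longrightarrow> finite A \<Longrightarrow> recog A (nmt_states T) (\<lambda>q w p. \<exists>x. nmt_op T q w (x, p))"
proof (induction T arbitrary: A)
  case (Simple Q q0 F \<delta> \<mu>)
  then show ?case using recog_simple by blast
next
  case (Nest C c0 Q q0 F \<delta> dc dr \<mu> T')
  obtain wf1: "finite C" and wf2: "c0 \<in> C" and wf3: "finite Q" and wf4: "q0 \<in> Q" and wf5: "F \<subseteq> Q"
    and wf6: "\<forall>q\<in>Q. \<forall>a. \<forall>c\<in>C. \<forall>c' q'. \<delta> q a c = Some (Some c', q') \<longrightarrow> c' \<in> C \<and> q' \<in> Q"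
    and wf7: "\<forall>q\<in>Q. \<forall>a. \<forall>c\<in>C. \<forall>q'. \<delta> q a c = Some (None, q') \<longrightarrow> q' \<in> Q"
    and wf8: "\<forall>q\<in>Q. \<forall>c\<in>C. dc q c \<in> nmt_states T'"
    and wf9: "\<forall>q\<in>Q. \<forall>c\<in>C. \<forall>p\<in>nmt_final T'. dr q c p \<in> Q"
    and wf10: "nmt_wf T'" using Nest.prems(1)[unfolded nmt_wf.simps] by (elim conjE) (rule that)
  note wf = wf1 wf2 wf3 wf4 wf5 wf6 wf7 wf8 wf9 wf10
  have finA': "finite (annset A C)" unfolding annset_def using Nest.prems(2) wf(1) by simp
  from Nest.IH[OF wf(10) finA'] obtain \<Phi>' :: "'a letter list \<Rightarrow> nat"
    where fin: "finite (\<Phi>' ` lists (annset A C))"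
    and c: "\<forall>u\<in>lists (annset A C). \<forall>u'\<in>lists (annset A C). \<forall>v\<in>lists (annset A C). \<forall>v'\<in>lists (annset A C).
        \<Phi>' u = \<Phi>' u' \<longrightarrow> \<Phi>' v = \<Phi>' v' \<longrightarrow> \<Phi>' (u @ v) = \<Phi>' (u' @ v')"
    and d: "\<forall>w\<in>lists (annset A C). \<forall>w'\<in>lists (annset A C). \<Phi>' w = \<Phi>' w' \<longrightarrow>
        (\<forall>q\<in>nmt_states T'. \<forall>p. (\<exists>x. nmt_op T' q w (x, p)) = (\<exists>x. nmt_op T' q w' (x, p)))"
    unfolding recog_def by (elim exE conjE) (rule that)
  interpret nctx C c0 Q F \<delta> dc dr \<mu> T' A \<Phi>'
  proof
    show "finite C" "c0 \<in> C" "finite Q" "F \<subseteq> Q" using wf(1,2,3,5) by simp_all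
    show "finite (\<Phi>' ` lists (annset A C))" by (fact fin)
    show "\<And>q a c c' q'. q \<in> Q \<Longrightarrow> c \<in> C \<Longrightarrow> \<delta> q a c = Some (Some c', q') \<Longrightarrow> c' \<in> C \<and> q' \<in> Q"
      by (rule wf(6)[rule_format])
    show "\<And>q a c q'. q \<in> Q \<Longrightarrow> c \<in> C \<Longrightarrow> \<delta> q a c = Some (None, q') \<Longrightarrow> q' \<in> Q"
      by (rule wf(7)[rule_format])
    show "\<And>q c. q \<in> Q \<Longrightarrow> c \<in> C \<Longrightarrow> dc q c \<in> nmt_states T'" by (rule wf(8)[rule_format])
    show "\<And>q c p. q \<in> Q \<Longrightarrow> c \<in> C \<Longrightarrow> p \<in> nmt_final T' \<Longrightarrow> dr q c p \<in> Q" by (rule wf(9)[rule_format])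
    show "\<And>u u' v v'. u \<in> lists (annset A C) \<Longrightarrow> u' \<in> lists (annset A C) \<Longrightarrow>
        v \<in> lists (annset A C) \<Longrightarrow> v' \<in> lists (annset A C) \<Longrightarrow>
        \<Phi>' u = \<Phi>' u' \<Longrightarrow> \<Phi>' v = \<Phi>' v' \<Longrightarrow> \<Phi>' (u @ v) = \<Phi>' (u' @ v')"
      by (rule c[rule_format])
    show "\<And>w w' q p. w \<in> lists (annset A C) \<Longrightarrow> w' \<in> lists (annset A C) \<Longrightarrow>
        \<Phi>' w = \<Phi>' w' \<Longrightarrow> q \<in> nmt_states T' \<Longrightarrow>
        (\<exists>x. nmt_op T' q w (x, p)) = (\<exists>x. nmt_op T' q w' (x, p))"
      by (rule d[rule_format])
  qed
  show ?case using recog_nest[of q0] by simp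
qed

theorem mainTheorem10:
  fixes T :: "('a :: finite, 'g) nmt"
  assumes "nmt_wf T"
  shows "regular_lang (nmt_dom T)"
proof (rule recog_regular)
  show "recog (range (\<lambda>a. (a, []))) (nmt_states T) (\<lambda>q w p. \<exists>x. nmt_op T q w (x, p))"
    by (rule main_recog[OF assms]) simp
  show "nmt_init T \<in> nmt_states T" using assms by (cases T) auto
qed

end
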